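(* Let $a\in\mathbb F^*$, let $g,h\in\mathcal R$ with $x^n-a=hg$, and let $c=\gamma(a,g)$. Then the map $$\psi:\mathcal S_a\to\mathcal S_{\theta^{-n}(c)},\qquad \overline f\mapsto\overline{f\,\theta^{-n}(h)}$$ is a well-defined left $\mathcal R$-module homomorphism with $\ker\psi=\mathcal R\overline g$.
   Context: $\mathbb F$ is a finite field, $\theta\in\mathrm{Aut}(\mathbb F)$, $\mathcal R=\mathbb F[x;\theta]$ the skew polynomial ring (elements $\sum f_ix^i$ with left coefficients, $xb=\theta(b)x$), $n\in\mathbb N$. Integer powers of $\theta$ act on $\mathcal R$ coefficientwise. For $e\in\mathbb F^*$, $\mathcal S_e=\mathcal R/\mathcal R(x^n-e)$ (left $\mathcal R$-module), $\overline f$ the coset of $f$, $\mathcal R\overline g$ the left submodule of $\mathcal S_a$ generated by $\overline g$. For a right divisor $g=\sum g_ix^i$ of $x^n-a$, $\gamma(a,g)=a\,g_0^{-1}\theta^n(g_0)$. *)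

theory Defs
  imports "HOL-Computational_Algebra.Polynomial"
begin

text \<open>Skew polynomial ring F[x;theta]. Elements are represented by their
coefficient lists (type 'a poly, used only as a container of coefficients,
f = sum f_i x^i with left coefficients); the multiplication is the skew one,
determined by x b = theta(b) x, i.e.
(sum_i f_i x^i)(sum_j g_j x^j) = sum_{i,j} f_i theta^i(g_j) x^(i+j).\<close>

definition is_field_aut :: "('a::field \<Rightarrow> 'a) \<Rightarrow> bool" where
  "is_field_aut \<theta> \<longleftrightarrow> bij \<theta> \<and> (\<forall>x y. \<theta> (x + y) = \<theta> x + \<theta> y)
      \<and> (\<forall>x y. \<theta> (x * y) = \<theta> x * \<theta> y) \<and> \<theta> 1 = 1"

definition skew_mult :: "('a::field \<Rightarrow> 'a) \<Rightarrow> 'a poly \<Rightarrow> 'a poly \<Rightarrow> 'a poly" where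
  "skew_mult \<theta> f g = (\<Sum>i\<le>degree f. \<Sum>j\<le>degree g.
       monom (coeff f i * (\<theta> ^^ i) (coeff g j)) (i + j))"

definition theta_pow_neg :: "('a::field \<Rightarrow> 'a) \<Rightarrow> nat \<Rightarrow> 'a \<Rightarrow> 'a" where
  "theta_pow_neg \<theta> n = (inv \<theta>) ^^ n"

definition theta_poly_neg :: "('a::field \<Rightarrow> 'a) \<Rightarrow> nat \<Rightarrow> 'a poly \<Rightarrow> 'a poly" where
  "theta_poly_neg \<theta> n p = map_poly (theta_pow_neg \<theta> n) p"

definition xn_minus :: "nat \<Rightarrow> 'a::field \<Rightarrow> 'a poly" where
  "xn_minus n e = monom 1 n - [:e:]"

text \<open>Congruence modulo the left ideal R(x^n - e): f and f' represent the
same element of S_e = R / R(x^n - e).\<close>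
definition skew_cong :: "('a::field \<Rightarrow> 'a) \<Rightarrow> nat \<Rightarrow> 'a \<Rightarrow> 'a poly \<Rightarrow> 'a poly \<Rightarrow> bool" where
  "skew_cong \<theta> n e f f' \<longleftrightarrow> (\<exists>q. f - f' = skew_mult \<theta> q (xn_minus n e))"

definition skew_gamma :: "('a::field \<Rightarrow> 'a) \<Rightarrow> nat \<Rightarrow> 'a \<Rightarrow> 'a poly \<Rightarrow> 'a" where
  "skew_gamma \<theta> n a g = a * inverse (coeff g 0) * (\<theta> ^^ n) (coeff g 0)"

end

theory Submission
  imports Defs
begin

lemma aut_basic:
  assumes "is_field_aut \<sigma>"
  shows aut_add: "\<sigma> (x + y) = \<sigma> x + \<sigma> y"
    and aut_mult: "\<sigma> (x * y) = \<sigma> x * \<sigma> y"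
    and aut_one: "\<sigma> 1 = 1"
    and aut_zero: "\<sigma> 0 = 0"
    and aut_inj: "inj \<sigma>"
proof -
  show a: "\<sigma> (x + y) = \<sigma> x + \<sigma> y" for x y using assms unfolding is_field_aut_def by blast
  show "\<sigma> (x * y) = \<sigma> x * \<sigma> y" using assms unfolding is_field_aut_def by blast
  show "\<sigma> 1 = 1" using assms unfolding is_field_aut_def by blast
  show "inj \<sigma>" using assms unfolding is_field_aut_def bij_def by blast
  have "\<sigma> (0 + 0) = \<sigma> 0 + \<sigma> 0" by (rule a)
  then have "\<sigma> 0 + \<sigma> 0 = \<sigma> 0 + 0" by simp
  then show "\<sigma> 0 = 0" by (rule add_left_imp_eq)
qed

lemma aut_eq0: "is_field_aut \<sigma> \<Longrightarrow> \<sigma> x = 0 \<longleftrightarrow> x = 0"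
  by (metis aut_inj aut_zero injD)

lemma aut_neg: "is_field_aut \<sigma> \<Longrightarrow> \<sigma> (- x) = - \<sigma> x"
  by (metis add.right_inverse add_eq_0_iff aut_add aut_zero)

lemma aut_diff: "is_field_aut \<sigma> \<Longrightarrow> \<sigma> (x - y) = \<sigma> x - \<sigma> y"
  by (metis aut_add aut_neg diff_conv_add_uminus)

lemma aut_inverse: "is_field_aut \<sigma> \<Longrightarrow> \<sigma> (inverse x) = inverse (\<sigma> x)"
proof (cases "x = 0")
  case True assume "is_field_aut \<sigma>" then show ?thesis using True by (simp add: aut_zero)
next
  case False assume A: "is_field_aut \<sigma>"
  have "\<sigma> x * \<sigma> (inverse x) = 1" using A False by (metis aut_mult aut_one right_inverse)
  then show ?thesis by (metis inverse_unique)
qed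

lemma aut_sum: "is_field_aut \<sigma> \<Longrightarrow> \<sigma> (\<Sum>i\<in>A. f i) = (\<Sum>i\<in>A. \<sigma> (f i))"
  by (induction A rule: infinite_finite_induct) (auto simp: aut_zero aut_add)

lemma aut_pow: "is_field_aut \<sigma> \<Longrightarrow> is_field_aut (\<sigma> ^^ k)"
proof (induction k)
  case 0 then show ?case by (auto simp: is_field_aut_def bij_def inj_on_def)
next
  case (Suc k)
  then show ?case using Suc.prems unfolding is_field_aut_def
    by (auto intro: bij_comp)
qed

lemma aut_inv: assumes A: "is_field_aut \<sigma>" shows "is_field_aut (inv \<sigma>)"
proof -
  have b: "bij \<sigma>" using A unfolding is_field_aut_def by blast
  have s: "\<sigma> (inv \<sigma> x) = x" for x using b by (simp add: bij_is_surj surj_f_inv_f)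
  have i: "inv \<sigma> (\<sigma> x) = x" for x using b by (simp add: bij_is_inj)
  have "inv \<sigma> (x + y) = inv \<sigma> x + inv \<sigma> y" for x y
    by (metis i s aut_add[OF A])
  moreover have "inv \<sigma> (x * y) = inv \<sigma> x * inv \<sigma> y" for x y
    by (metis i s aut_mult[OF A])
  moreover have "inv \<sigma> 1 = 1" by (metis i aut_one[OF A])
  ultimately show ?thesis using b bij_imp_bij_inv unfolding is_field_aut_def by blast
qed

lemma map_poly_aut_add: "is_field_aut \<sigma> \<Longrightarrow> map_poly \<sigma> (p + q) = map_poly \<sigma> p + map_poly \<sigma> q"
  by (intro poly_eqI) (simp add: coeff_map_poly aut_zero aut_add)

lemma map_poly_aut_diff: "is_field_aut \<sigma> \<Longrightarrow> map_poly \<sigma> (p - q) = map_poly \<sigma> p - map_poly \<sigma> q"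
  by (intro poly_eqI) (simp add: coeff_map_poly aut_zero aut_diff)

lemma map_poly_aut_sum: "is_field_aut \<sigma> \<Longrightarrow> map_poly \<sigma> (\<Sum>i\<in>A. f i) = (\<Sum>i\<in>A. map_poly \<sigma> (f i))"
  by (induction A rule: infinite_finite_induct) (auto simp: map_poly_aut_add)

lemma map_poly_aut_mult: "is_field_aut \<sigma> \<Longrightarrow> map_poly \<sigma> (p * q) = map_poly \<sigma> p * map_poly \<sigma> q"
  by (intro poly_eqI) (simp add: coeff_map_poly aut_zero coeff_mult aut_sum aut_mult)

lemma degree_map_aut: "is_field_aut \<sigma> \<Longrightarrow> degree (map_poly \<sigma> p) = degree p"
  by (rule degree_map_poly) (simp add: aut_eq0)

lemma skew_alt:
  assumes A: "is_field_aut \<theta>"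
  shows "skew_mult \<theta> f g = (\<Sum>i\<le>degree f. monom (coeff f i) i * map_poly (\<theta>^^i) g)"
  unfolding skew_mult_def
proof (rule sum.cong[OF refl])
  fix i
  have Ai: "is_field_aut (\<theta>^^i)" by (rule aut_pow[OF A])
  have "map_poly (\<theta>^^i) g = (\<Sum>j\<le>degree g. monom (coeff (map_poly (\<theta>^^i) g) j) j)"
    using poly_as_sum_of_monoms[of "map_poly (\<theta>^^i) g"] by (simp add: degree_map_aut[OF Ai])
  also have "\<dots> = (\<Sum>j\<le>degree g. monom ((\<theta>^^i) (coeff g j)) j)"
    by (simp add: coeff_map_poly aut_zero[OF Ai])
  finally show "(\<Sum>j\<le>degree g. monom (coeff f i * (\<theta> ^^ i) (coeff g j)) (i + j)) =
        monom (coeff f i) i * map_poly (\<theta> ^^ i) g"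
    by (simp add: sum_distrib_left mult_monom)
qed

lemma skew_le:
  assumes A: "is_field_aut \<theta>" and N: "degree f \<le> N"
  shows "skew_mult \<theta> f g = (\<Sum>i\<le>N. monom (coeff f i) i * map_poly (\<theta>^^i) g)"
  unfolding skew_alt[OF A]
  by (rule sum.mono_neutral_left) (use N in \<open>auto simp: coeff_eq_0\<close>)

lemma skew_add_left:
  assumes A: "is_field_aut \<theta>"
  shows "skew_mult \<theta> (f1 + f2) g = skew_mult \<theta> f1 g + skew_mult \<theta> f2 g"
proof -
  define N where "N = max (degree f1) (degree f2)"
  have "degree (f1 + f2) \<le> N" unfolding N_def by (rule degree_add_le_max)
  then show ?thesis
    using skew_le[OF A, of f1 N g] skew_le[OF A, of f2 N g] skew_le[OF A, of "f1+f2" N g]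
    by (simp add: N_def add_monom[symmetric] distrib_right sum.distrib)
qed

lemma skew_zero_left: "is_field_aut \<theta> \<Longrightarrow> skew_mult \<theta> 0 g = 0"
  by (simp add: skew_alt)

lemma skew_diff_left:
  assumes A: "is_field_aut \<theta>"
  shows "skew_mult \<theta> (f1 - f2) g = skew_mult \<theta> f1 g - skew_mult \<theta> f2 g"
  using skew_add_left[OF A, of "f1 - f2" f2 g] by simp

lemma skew_sum_left:
  assumes A: "is_field_aut \<theta>"
  shows "skew_mult \<theta> (\<Sum>i\<in>S. F i) g = (\<Sum>i\<in>S. skew_mult \<theta> (F i) g)"
  by (induction S rule: infinite_finite_induct) (auto simp: skew_zero_left[OF A] skew_add_left[OF A])

lemma skew_monom_left:
  assumes A: "is_field_aut \<theta>"
  shows "skew_mult \<theta> (monom c k) h = monom c k * map_poly (\<theta>^^k) h"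
proof -
  have "skew_mult \<theta> (monom c k) h = (\<Sum>i\<le>k. monom (coeff (monom c k) i) i * map_poly (\<theta>^^i) h)"
    by (rule skew_le[OF A]) (simp add: degree_monom_le)
  also have "\<dots> = (\<Sum>i\<le>k. if i = k then monom c k * map_poly (\<theta>^^k) h else 0)"
    by (rule sum.cong) auto
  finally show ?thesis by simp
qed

lemma skew_add_right:
  assumes A: "is_field_aut \<theta>"
  shows "skew_mult \<theta> f (g1 + g2) = skew_mult \<theta> f g1 + skew_mult \<theta> f g2"
  by (simp add: skew_alt[OF A] map_poly_aut_add[OF aut_pow[OF A]] distrib_left sum.distrib)

lemma map_monom_mult:
  assumes A: "is_field_aut \<sigma>"
  shows "map_poly \<sigma> (monom c j * p) = monom (\<sigma> c) j * map_poly \<sigma> p"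
  by (simp add: map_poly_aut_mult[OF A] map_poly_monom aut_zero[OF A])

lemma skew_assoc:
  assumes A: "is_field_aut \<theta>"
  shows "skew_mult \<theta> (skew_mult \<theta> f g) h = skew_mult \<theta> f (skew_mult \<theta> g h)"
proof -
  have "skew_mult \<theta> (skew_mult \<theta> f g) h =
     (\<Sum>i\<le>degree f. \<Sum>j\<le>degree g. monom (coeff f i * (\<theta>^^i) (coeff g j)) (i+j) * map_poly (\<theta>^^(i+j)) h)"
    unfolding skew_mult_def[of \<theta> f g]
    by (simp add: skew_sum_left[OF A] skew_monom_left[OF A])
  also have "\<dots> = (\<Sum>i\<le>degree f. monom (coeff f i) i * map_poly (\<theta>^^i) (skew_mult \<theta> g h))"
  proof (rule sum.cong[OF refl])
    fix i
    have Ai: "is_field_aut (\<theta>^^i)" by (rule aut_pow[OF A])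
    have "map_poly (\<theta>^^i) (skew_mult \<theta> g h) =
      (\<Sum>j\<le>degree g. monom ((\<theta>^^i) (coeff g j)) j * map_poly (\<theta>^^(i+j)) h)"
      by (simp add: skew_alt[OF A, of g h] map_poly_aut_sum[OF Ai] map_monom_mult[OF Ai]
            map_poly_map_poly aut_zero[OF aut_pow[OF A]] funpow_add)
    then show "(\<Sum>j\<le>degree g. monom (coeff f i * (\<theta>^^i) (coeff g j)) (i+j) * map_poly (\<theta>^^(i+j)) h) =
      monom (coeff f i) i * map_poly (\<theta>^^i) (skew_mult \<theta> g h)"
      by (simp add: sum_distrib_left mult_monom mult.assoc[symmetric])
  qed
  also have "\<dots> = skew_mult \<theta> f (skew_mult \<theta> g h)" by (simp add: skew_alt[OF A])
  finally show ?thesis .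
qed


lemma skew_diff_right:
  assumes A: "is_field_aut \<theta>"
  shows "skew_mult \<theta> f (g1 - g2) = skew_mult \<theta> f g1 - skew_mult \<theta> f g2"
  using skew_add_right[OF A, of f "g1 - g2" g2] by simp

lemma skew_monom_one_right:
  assumes A: "is_field_aut \<theta>"
  shows "skew_mult \<theta> h (monom 1 n) = h * monom 1 n"
proof -
  have "skew_mult \<theta> h (monom 1 n) = (\<Sum>i\<le>degree h. monom (coeff h i) i * monom 1 n)"
    by (simp add: skew_alt[OF A] map_poly_monom aut_zero[OF aut_pow[OF A]] aut_one[OF aut_pow[OF A]])
  also have "\<dots> = h * monom 1 n" by (simp add: sum_distrib_right[symmetric] poly_as_sum_of_monoms)
  finally show ?thesis .
qed

lemma skew_const_left:
  assumes A: "is_field_aut \<theta>"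
  shows "skew_mult \<theta> [:a:] p = smult a p"
  using skew_monom_left[OF A, of a 0 p] by (simp add: monom_0)

lemma skew_coeff0:
  assumes A: "is_field_aut \<theta>"
  shows "coeff (skew_mult \<theta> f g) 0 = coeff f 0 * coeff g 0"
proof -
  have "coeff (skew_mult \<theta> f g) 0 = (\<Sum>i\<le>degree f. if i = 0 then coeff f 0 * coeff g 0 else 0)"
    unfolding skew_alt[OF A] coeff_sum
    by (rule sum.cong) (auto simp: coeff_monom_mult coeff_map_poly aut_zero[OF aut_pow[OF A]])
  then show ?thesis by simp
qed

lemma skew_degree:
  assumes A: "is_field_aut \<theta>" and f: "f \<noteq> 0" and g: "g \<noteq> 0"
  shows "degree (skew_mult \<theta> f g) = degree f + degree g"
proof -
  let ?K = "degree f + degree g"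
  have Z: "\<And>i. is_field_aut (\<theta>^^i)" by (rule aut_pow[OF A])
  have hi: "coeff (skew_mult \<theta> f g) k = 0" if k: "k > ?K" for k
    unfolding skew_alt[OF A] coeff_sum
  proof (rule sum.neutral, rule ballI)
    fix i assume "i \<in> {..degree f}"
    then have "k - i > degree g" using k by auto
    then show "coeff (monom (coeff f i) i * map_poly (\<theta> ^^ i) g) k = 0"
      by (simp add: coeff_monom_mult coeff_map_poly aut_zero[OF Z] coeff_eq_0)
  qed
  have "coeff (skew_mult \<theta> f g) ?K =
     (\<Sum>i\<le>degree f. if i = degree f then lead_coeff f * (\<theta>^^degree f) (lead_coeff g) else 0)"
    unfolding skew_alt[OF A] coeff_sum
  proof (rule sum.cong[OF refl])
    fix i assume "i \<in> {..degree f}"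
    then have i: "i \<le> degree f" by simp
    show "coeff (monom (coeff f i) i * map_poly (\<theta> ^^ i) g) ?K =
      (if i = degree f then lead_coeff f * (\<theta>^^degree f) (lead_coeff g) else 0)"
    proof (cases "i = degree f")
      case True then show ?thesis by (simp add: coeff_monom_mult coeff_map_poly aut_zero[OF Z])
    next
      case False
      then have "?K - i > degree g" using i by auto
      then show ?thesis using False i
        by (simp add: coeff_monom_mult coeff_map_poly aut_zero[OF Z] coeff_eq_0)
    qed
  qed
  also have "\<dots> = lead_coeff f * (\<theta>^^degree f) (lead_coeff g)" by simp
  also have "\<dots> \<noteq> 0" using f g by (simp add: aut_eq0[OF Z])
  finally have "coeff (skew_mult \<theta> f g) ?K \<noteq> 0" .
  then have "?K \<le> degree (skew_mult \<theta> f g)" by (rule le_degree)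
  moreover have "degree (skew_mult \<theta> f g) \<le> ?K" using hi by (intro degree_le) auto
  ultimately show ?thesis by simp
qed

lemma skew_nonzero:
  assumes A: "is_field_aut \<theta>" and f: "f \<noteq> 0" and g: "g \<noteq> 0"
  shows "skew_mult \<theta> f g \<noteq> 0"
proof
  assume z: "skew_mult \<theta> f g = 0"
  then have "degree f = 0" "degree g = 0" using skew_degree[OF A f g] by auto
  then have "coeff f 0 \<noteq> 0" "coeff g 0 \<noteq> 0" using f g by (metis leading_coeff_0_iff)+
  then show False using skew_coeff0[OF A, of f g] z by simp
qed

lemma psi_theta: "is_field_aut \<theta> \<Longrightarrow> (inv \<theta> ^^ n) ((\<theta> ^^ n) x) = x"
proof (induction n arbitrary: x)
  case 0 then show ?case by simp
next
  case (Suc n)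
  have "bij \<theta>" using Suc.prems unfolding is_field_aut_def by blast
  then have "inv \<theta> (\<theta> y) = y" for y by (simp add: bij_is_inj)
  moreover have "(inv \<theta> ^^ Suc n) = (inv \<theta> ^^ n) \<circ> inv \<theta>" by (rule funpow_Suc_right)
  moreover have "\<theta> ^^ Suc n = \<theta> \<circ> \<theta> ^^ n" by simp
  ultimately show ?case using Suc by (simp del: funpow.simps)
qed

lemma theta_psi: "is_field_aut \<theta> \<Longrightarrow> (\<theta> ^^ n) ((inv \<theta> ^^ n) x) = x"
proof (induction n arbitrary: x)
  case 0 then show ?case by simp
next
  case (Suc n)
  have "bij \<theta>" using Suc.prems unfolding is_field_aut_def by blast
  then have "\<theta> (inv \<theta> y) = y" for y by (simp add: bij_is_surj surj_f_inv_f)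
  moreover have "(\<theta> ^^ Suc n) = (\<theta> ^^ n) \<circ> \<theta>" by (rule funpow_Suc_right)
  moreover have "inv \<theta> ^^ Suc n = inv \<theta> \<circ> inv \<theta> ^^ n" by simp
  ultimately show ?case using Suc by (simp del: funpow.simps)
qed


lemma key:
  fixes \<theta> :: "'a::field \<Rightarrow> 'a"
  assumes A: "is_field_aut \<theta>" and n: "n \<ge> 1" and a: "a \<noteq> 0"
    and fact: "xn_minus n a = skew_mult \<theta> h g"
  shows "skew_mult \<theta> g (theta_poly_neg \<theta> n h) = xn_minus n (theta_pow_neg \<theta> n (skew_gamma \<theta> n a g))"
    and "h \<noteq> 0"
proof -
  define \<psi> where "\<psi> = inv \<theta> ^^ n"
  have Ap: "is_field_aut \<psi>" unfolding \<psi>_def by (rule aut_pow[OF aut_inv[OF A]])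
  have An: "is_field_aut (\<theta>^^n)" by (rule aut_pow[OF A])
  define H where "H = map_poly \<psi> h"
  define X where "X = (monom 1 n :: 'a poly)"
  have HH: "theta_poly_neg \<theta> n h = H" unfolding H_def \<psi>_def theta_poly_neg_def theta_pow_neg_def ..
  have xa: "xn_minus n a = X - [:a:]" unfolding xn_minus_def X_def ..
  have "coeff (xn_minus n a) n = 1" using n by (cases n) (simp_all add: xn_minus_def)
  then show hnz: "h \<noteq> 0" using fact skew_zero_left[OF A, of g] by auto
  have comp: "(\<theta>^^n) \<circ> \<psi> = (\<lambda>x. x)" unfolding \<psi>_def using theta_psi[OF A] by (auto simp: fun_eq_iff)
  have sXH: "skew_mult \<theta> X H = X * h"
    unfolding X_def H_def skew_monom_left[OF A]
    by (simp add: map_poly_map_poly aut_zero[OF An] aut_zero[OF Ap] comp)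
  have shX: "skew_mult \<theta> h X = h * X" unfolding X_def by (rule skew_monom_one_right[OF A])
  define D where "D = skew_mult \<theta> g H - X"
  have hD: "skew_mult \<theta> h D = - smult a H"
  proof -
    have "skew_mult \<theta> h D = skew_mult \<theta> (skew_mult \<theta> h g) H - skew_mult \<theta> h X"
      unfolding D_def by (simp add: skew_diff_right[OF A] skew_assoc[OF A])
    also have "\<dots> = skew_mult \<theta> X H - smult a H - h * X"
      unfolding fact[symmetric] xa by (simp add: skew_diff_left[OF A] skew_const_left[OF A] shX)
    finally show ?thesis using sXH by (simp add: mult.commute)
  qed
  have dH: "degree H = degree h" unfolding H_def by (rule degree_map_aut[OF Ap])
  have "degree D = 0"
  proof (cases "D = 0")
    case False
    have "degree (skew_mult \<theta> h D) = degree h + degree D" by (rule skew_degree[OF A hnz False])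
    moreover have "degree (- smult a H) = degree h" using a dH by simp
    ultimately show ?thesis using hD by simp
  qed simp
  then obtain \<delta> where Dd: "D = [:\<delta>:]" using degree0_coeffs by blast
  have h0: "coeff h 0 * \<delta> = - (a * \<psi> (coeff h 0))"
    using arg_cong[OF hD, of "\<lambda>p. coeff p 0"] unfolding Dd skew_coeff0[OF A] H_def
    by (simp add: coeff_map_poly aut_zero[OF Ap])
  have hg0: "coeff h 0 * coeff g 0 = - a"
    using arg_cong[OF fact, of "\<lambda>p. coeff p 0"] n unfolding skew_coeff0[OF A]
    by (simp add: xn_minus_def)
  then have h0nz: "coeff h 0 \<noteq> 0" and g0nz: "coeff g 0 \<noteq> 0" using a by auto
  have hform: "coeff h 0 = - (a * inverse (coeff g 0))" using hg0 g0nz by (simp add: field_simps)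
  have psih: "\<psi> (coeff h 0) = - (\<psi> a * inverse (\<psi> (coeff g 0)))"
    unfolding hform by (simp add: aut_neg[OF Ap] aut_mult[OF Ap] aut_inverse[OF Ap])
  have psic: "theta_pow_neg \<theta> n (skew_gamma \<theta> n a g) = \<psi> a * inverse (\<psi> (coeff g 0)) * coeff g 0"
    unfolding theta_pow_neg_def skew_gamma_def \<psi>_def[symmetric]
    using psi_theta[OF A, of n "coeff g 0"] by (simp add: aut_mult[OF Ap] aut_inverse[OF Ap] \<psi>_def[symmetric])
  have psig: "\<psi> (coeff g 0) \<noteq> 0" using g0nz by (simp add: aut_eq0[OF Ap])
  have "\<delta> = - (a * \<psi> (coeff h 0)) / coeff h 0" using h0 h0nz by (simp add: field_simps)
  also have "\<dots> = - theta_pow_neg \<theta> n (skew_gamma \<theta> n a g)"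
    using a g0nz psig unfolding psic psih by (simp add: hform field_simps)
  finally have dl: "\<delta> = - theta_pow_neg \<theta> n (skew_gamma \<theta> n a g)" .
  then show "skew_mult \<theta> g (theta_poly_neg \<theta> n h) = xn_minus n (theta_pow_neg \<theta> n (skew_gamma \<theta> n a g))"
  proof -
    have "skew_mult \<theta> g H = X + [:\<delta>:]" using Dd unfolding D_def by (metis add.commute diff_add_cancel)
    also have "[:\<delta>:] = - [:theta_pow_neg \<theta> n (skew_gamma \<theta> n a g):]" using dl by simp
    finally show ?thesis unfolding HH xn_minus_def X_def by simp
  qed
qed

theorem proposition6p5:
  fixes \<theta> :: "'a::{finite,field} \<Rightarrow> 'a" and n :: nat and a :: 'a and g h :: "'a poly"
  assumes aut: "is_field_aut \<theta>"
    and n: "n \<ge> 1"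
    and a: "a \<noteq> 0"
    and fact: "xn_minus n a = skew_mult \<theta> h g"
  defines "c \<equiv> skew_gamma \<theta> n a g"
  shows
    \<comment> \<open>well-defined\<close>
    "(\<forall>f f'. skew_cong \<theta> n a f f' \<longrightarrow>
        skew_cong \<theta> n (theta_pow_neg \<theta> n c)
          (skew_mult \<theta> f (theta_poly_neg \<theta> n h)) (skew_mult \<theta> f' (theta_poly_neg \<theta> n h)))
     \<comment> \<open>left R-module homomorphism: psi(r f1 + f2) = r psi(f1) + psi(f2)\<close>
     \<and> (\<forall>r f1 f2.
        skew_cong \<theta> n (theta_pow_neg \<theta> n c)
          (skew_mult \<theta> (skew_mult \<theta> r f1 + f2) (theta_poly_neg \<theta> n h))
          (skew_mult \<theta> r (skew_mult \<theta> f1 (theta_poly_neg \<theta> n h))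
             + skew_mult \<theta> f2 (theta_poly_neg \<theta> n h)))
     \<comment> \<open>kernel is R g-bar\<close>
     \<and> (\<forall>f. skew_cong \<theta> n (theta_pow_neg \<theta> n c) (skew_mult \<theta> f (theta_poly_neg \<theta> n h)) 0
          \<longleftrightarrow> (\<exists>r. skew_cong \<theta> n a f (skew_mult \<theta> r g)))"
  proof -
  define H where "H = theta_poly_neg \<theta> n h"
  define E where "E = xn_minus n (theta_pow_neg \<theta> n c)"
  have gH: "skew_mult \<theta> g H = E" unfolding H_def E_def c_def by (rule key(1)[OF aut n a fact])
  have hnz: "h \<noteq> 0" by (rule key(2)[OF aut n a fact])
  have Hnz: "H \<noteq> 0" unfolding H_def theta_poly_neg_def
    using hnz by (simp add: map_poly_eq_0_iff aut_zero[OF aut_pow[OF aut_inv[OF aut]]]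
        aut_eq0[OF aut_pow[OF aut_inv[OF aut]]] theta_pow_neg_def)
  note L = skew_add_left[OF aut] skew_diff_left[OF aut] skew_assoc[OF aut] skew_zero_left[OF aut]
  have P1: "skew_cong \<theta> n (theta_pow_neg \<theta> n c) (skew_mult \<theta> f H) (skew_mult \<theta> f' H)"
    if "skew_cong \<theta> n a f f'" for f f'
  proof -
    from that obtain q where q: "f - f' = skew_mult \<theta> q (xn_minus n a)" unfolding skew_cong_def by blast
    have "skew_mult \<theta> f H - skew_mult \<theta> f' H = skew_mult \<theta> (skew_mult \<theta> q h) E"
      by (simp add: L(2)[symmetric] q fact L(3) gH)
    then show ?thesis unfolding skew_cong_def E_def by blast
  qed
  have P2: "skew_cong \<theta> n (theta_pow_neg \<theta> n c) (skew_mult \<theta> (skew_mult \<theta> r f1 + f2) H)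
          (skew_mult \<theta> r (skew_mult \<theta> f1 H) + skew_mult \<theta> f2 H)" for r f1 f2
  proof -
    have "skew_mult \<theta> (skew_mult \<theta> r f1 + f2) H - (skew_mult \<theta> r (skew_mult \<theta> f1 H) + skew_mult \<theta> f2 H)
      = skew_mult \<theta> 0 E" by (simp add: L)
    then show ?thesis unfolding skew_cong_def E_def by blast
  qed
  have P3: "skew_cong \<theta> n (theta_pow_neg \<theta> n c) (skew_mult \<theta> f H) 0
          \<longleftrightarrow> (\<exists>r. skew_cong \<theta> n a f (skew_mult \<theta> r g))" for f
  proof
    assume "skew_cong \<theta> n (theta_pow_neg \<theta> n c) (skew_mult \<theta> f H) 0"
    then obtain q where q: "skew_mult \<theta> f H = skew_mult \<theta> q E" unfolding skew_cong_def E_def by auto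
    then have "skew_mult \<theta> (f - skew_mult \<theta> q g) H = 0" by (simp add: L gH[symmetric])
    then have "f - skew_mult \<theta> q g = 0" using skew_nonzero[OF aut _ Hnz] by blast
    then have "f - skew_mult \<theta> q g = skew_mult \<theta> 0 (xn_minus n a)" by (simp add: L)
    then show "\<exists>r. skew_cong \<theta> n a f (skew_mult \<theta> r g)" unfolding skew_cong_def by blast
  next
    assume "\<exists>r. skew_cong \<theta> n a f (skew_mult \<theta> r g)"
    then obtain r q where q: "f - skew_mult \<theta> r g = skew_mult \<theta> q (xn_minus n a)"
      unfolding skew_cong_def by blast
    have "f = skew_mult \<theta> (r + skew_mult \<theta> q h) g"
      using q by (simp add: L fact) (metis add.commute diff_add_cancel)
    then have "skew_mult \<theta> f H - 0 = skew_mult \<theta> (r + skew_mult \<theta> q h) E"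
      by (simp add: L gH)
    then show "skew_cong \<theta> n (theta_pow_neg \<theta> n c) (skew_mult \<theta> f H) 0"
      unfolding skew_cong_def E_def by blast
  qed
  show ?thesis using P1 P2 P3 unfolding H_def by blast
qed

end
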